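(* Assume the general single-user setting below and let $T=\tau_n+D_n$. For $1\le\tau\le T$ and each state $i$, let $e^*(\tau,i)$ denote the smallest element of $\mathcal E$ attaining the maximum in the recursion defining $V(0,\tau,i)$. Then $$e^*(\tau+1,i)\le e^*(\tau,i)\qquad\text{for all states } i \text{ and all } 1\le\tau<T.$$
   Context: General single-user setting (perfect prediction): fix $\beta\ge0$, $\lambda\ge0$ and integers $\tau_n\ge1$, $D_n\ge0$. The channel is a finite-state Markov chain on $\{1,\dots,K\}$ with transition matrix $(P^{i,j})$. $\mathcal E\subset[0,\infty)$ is a finite set of resource levels containing $0$ and at least one positive element. For each state $i$, $\zeta(i,\cdot):\mathcal E\to[0,1]$ is the transmission success probability, with $\zeta(i,0)=0$, $\zeta(i,e)>0$ for $e>0$, and $\zeta(i,\cdot)$ is the restriction to $\mathcal E$ of a concave, strictly increasing function. The value function is defined by $V(0,0,i)=0$ and, for $1\le\tau\le\tau_n+D_n$, $$V(0,\tau,i)=\max_{e\in\mathcal E}\Big\{-\lambda e+\zeta(i,e)\beta+(1-\zeta(i,e))\sum_{j}P^{i,j}V(0,\tau-1,j)\Big\}.$$ Here $\tau$ is the remaining time to deadline of an undelivered packet, $i$ the current channel state, $\beta$ the delivery reward and $\lambda$ the per-unit resource cost. *)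

theory Defs
  imports "HOL-Analysis.Analysis"
begin

text \<open>Channel states are the elements of a finite type 's (standing for {1..K}).
  P i j is the transition probability, zeta i e the success probability,
  beta the delivery reward, lam the per-unit resource cost, E the resource levels.\<close>

definition objective ::
  "real \<Rightarrow> real \<Rightarrow> ('s::finite \<Rightarrow> 's \<Rightarrow> real) \<Rightarrow> ('s \<Rightarrow> real \<Rightarrow> real)
     \<Rightarrow> ('s \<Rightarrow> real) \<Rightarrow> 's \<Rightarrow> real \<Rightarrow> real" where
  "objective beta lam P zeta W i e =
     - lam * e + zeta i e * beta + (1 - zeta i e) * (\<Sum>j\<in>UNIV. P i j * W j)"

text \<open>V beta lam P E zeta tau i is V(0,tau,i) of the paper.\<close>
fun V :: "real \<Rightarrow> real \<Rightarrow> ('s::finite \<Rightarrow> 's \<Rightarrow> real) \<Rightarrow> real set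
     \<Rightarrow> ('s \<Rightarrow> real \<Rightarrow> real) \<Rightarrow> nat \<Rightarrow> 's \<Rightarrow> real" where
  "V beta lam P E zeta 0 i = 0"
| "V beta lam P E zeta (Suc t) i =
     Max ((\<lambda>e. objective beta lam P zeta (V beta lam P E zeta t) i e) ` E)"

text \<open>e*(tau,i): smallest element of E attaining the maximum in the recursion for V(0,tau,i),
  for tau \<ge> 1 (the recursion uses V(0,tau-1,.)).\<close>
definition estar :: "real \<Rightarrow> real \<Rightarrow> ('s::finite \<Rightarrow> 's \<Rightarrow> real) \<Rightarrow> real set
     \<Rightarrow> ('s \<Rightarrow> real \<Rightarrow> real) \<Rightarrow> nat \<Rightarrow> 's \<Rightarrow> real" where
  "estar beta lam P E zeta tau i =
     Min {e \<in> E. \<forall>e'\<in>E.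
        objective beta lam P zeta (V beta lam P E zeta (tau - 1)) i e'
          \<le> objective beta lam P zeta (V beta lam P E zeta (tau - 1)) i e}"

end

theory Submission
  imports Defs
begin

lemma V_mono_step:
  fixes P :: "'s::finite \<Rightarrow> 's \<Rightarrow> real"
  assumes P_nonneg: "\<forall>i j. P i j \<ge> 0"
    and E_fin: "finite E" and E0: "0 \<in> E"
    and zeta_range: "\<forall>i. \<forall>e\<in>E. 0 \<le> zeta i e \<and> zeta i e \<le> 1"
    and zeta_zero: "\<forall>i. zeta i 0 = 0"
  shows "V beta lam P E zeta t j \<le> V beta lam P E zeta (Suc t) j"
proof (induction t arbitrary: j)
  case 0
  have "objective beta lam P zeta (V beta lam P E zeta 0) j 0
        \<in> (\<lambda>e. objective beta lam P zeta (V beta lam P E zeta 0) j e) ` E" using E0 by blast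
  hence "objective beta lam P zeta (V beta lam P E zeta 0) j 0 \<le> V beta lam P E zeta (Suc 0) j"
    using E_fin by simp
  moreover have "objective beta lam P zeta (V beta lam P E zeta 0) j 0 = 0"
    using zeta_zero by (simp add: objective_def)
  ultimately show ?case by simp
next
  case (Suc t)
  have ne: "E \<noteq> {}" using E0 by blast
  obtain e where e: "e \<in> E" and em: "V beta lam P E zeta (Suc t) j =
      objective beta lam P zeta (V beta lam P E zeta t) j e"
  proof -
    have "Max ((\<lambda>e. objective beta lam P zeta (V beta lam P E zeta t) j e) ` E)
       \<in> (\<lambda>e. objective beta lam P zeta (V beta lam P E zeta t) j e) ` E"
      using E_fin ne by (intro Max_in) auto
    thus ?thesis using that by auto
  qed
  have "(\<Sum>k\<in>UNIV. P j k * V beta lam P E zeta t k) \<le> (\<Sum>k\<in>UNIV. P j k * V beta lam P E zeta (Suc t) k)"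
    by (rule sum_mono, rule mult_left_mono, rule Suc.IH) (simp add: P_nonneg)
  moreover have "1 - zeta j e \<ge> 0" using zeta_range e by auto
  ultimately have "objective beta lam P zeta (V beta lam P E zeta t) j e
      \<le> objective beta lam P zeta (V beta lam P E zeta (Suc t)) j e"
    unfolding objective_def by (simp add: mult_left_mono)
  also have "\<dots> \<le> V beta lam P E zeta (Suc (Suc t)) j" using e E_fin by simp
  finally show ?case using em by simp
qed

lemma argmin_mono:
  fixes E :: "real set" and beta lam :: real
  assumes E_fin: "finite E" and ne: "E \<noteq> {}"
    and zmono: "\<And>x y. x \<in> E \<Longrightarrow> y \<in> E \<Longrightarrow> x < y \<Longrightarrow> z x \<le> z y"
    and ss: "s \<le> s'"
  defines "f \<equiv> \<lambda>s e. - lam * e + z e * beta + (1 - z e) * (s::real)"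
  shows "Min {e \<in> E. \<forall>e'\<in>E. f s' e' \<le> f s' e} \<le> Min {e \<in> E. \<forall>e'\<in>E. f s e' \<le> f s e}"
proof -
  have nonempty: "{e \<in> E. \<forall>e'\<in>E. f t e' \<le> f t e} \<noteq> {}" for t
  proof -
    have "Max (f t ` E) \<in> f t ` E" using E_fin ne by (intro Max_in) auto
    then obtain m where "m \<in> E" "f t m = Max (f t ` E)" by auto
    hence "m \<in> {e \<in> E. \<forall>e'\<in>E. f t e' \<le> f t e}" using E_fin by auto
    thus ?thesis by blast
  qed
  define e where "e = Min {e \<in> E. \<forall>e'\<in>E. f s e' \<le> f s e}"
  define e' where "e' = Min {e \<in> E. \<forall>e'\<in>E. f s' e' \<le> f s' e}"
  have eA: "e \<in> {e \<in> E. \<forall>e'\<in>E. f s e' \<le> f s e}" unfolding e_def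
    by (rule Min_in) (use E_fin nonempty in auto)
  have e'A: "e' \<in> {e \<in> E. \<forall>e'\<in>E. f s' e' \<le> f s' e}" unfolding e'_def
    by (rule Min_in) (use E_fin nonempty in auto)
  show ?thesis
  proof (rule ccontr)
    assume "\<not> ?thesis"
    hence lt: "e < e'" unfolding e_def e'_def by simp
    have "e \<notin> {e \<in> E. \<forall>e'\<in>E. f s' e' \<le> f s' e}"
    proof
      assume "e \<in> {e \<in> E. \<forall>e'\<in>E. f s' e' \<le> f s' e}"
      hence "e' \<le> e" unfolding e'_def using E_fin by simp
      thus False using lt by simp
    qed
    then obtain x where "x \<in> E" "f s' x > f s' e" using eA by auto
    hence g1: "f s' e' > f s' e" using e'A by force
    have g2: "f s e' \<le> f s e" using eA e'A by auto
    have zz: "z e \<le> z e'" using zmono eA e'A lt by auto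
    have "f s e' - f s e = (f s' e' - f s' e) + (z e' - z e) * (s' - s)"
      unfolding f_def by (simp add: algebra_simps)
    moreover have "(z e' - z e) * (s' - s) \<ge> 0" using zz ss by simp
    ultimately show False using g1 g2 by linarith
  qed
qed

theorem theorem6:
  fixes beta lam :: real
    and tau_n D_n :: nat
    and P :: "'s::finite \<Rightarrow> 's \<Rightarrow> real"
    and E :: "real set"
    and zeta :: "'s \<Rightarrow> real \<Rightarrow> real"
  assumes "beta \<ge> 0" and "lam \<ge> 0" and "tau_n \<ge> 1"
    and P_nonneg: "\<forall>i j. P i j \<ge> 0"
    and P_stoch: "\<forall>i. (\<Sum>j\<in>UNIV. P i j) = 1"
    and E_fin: "finite E" and E_nonneg: "E \<subseteq> {0..}" and "0 \<in> E"
    and "\<exists>e\<in>E. e > 0"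
    and zeta_range: "\<forall>i. \<forall>e\<in>E. 0 \<le> zeta i e \<and> zeta i e \<le> 1"
    and zeta_zero: "\<forall>i. zeta i 0 = 0"
    and zeta_pos: "\<forall>i. \<forall>e\<in>E. e > 0 \<longrightarrow> zeta i e > 0"
    and zeta_conc: "\<forall>i. \<exists>f. concave_on {0..} f \<and> strict_mono_on {0..} f
                         \<and> (\<forall>e\<in>E. zeta i e = f e)"
  shows "\<forall>i. \<forall>tau. 1 \<le> tau \<and> tau < tau_n + D_n \<longrightarrow>
           estar beta lam P E zeta (tau + 1) i \<le> estar beta lam P E zeta tau i"
proof (intro allI impI)
  fix i tau assume h: "1 \<le> tau \<and> tau < tau_n + D_n"
  then obtain t where t: "tau = Suc t" by (cases tau) auto
  have ne: "E \<noteq> {}" using \<open>0 \<in> E\<close> by blast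
  obtain g where g: "strict_mono_on {0..} g" "\<forall>e\<in>E. zeta i e = g e" using zeta_conc by blast
  have zmono: "zeta i x \<le> zeta i y" if "x \<in> E" "y \<in> E" "x < y" for x y
  proof -
    have "g x < g y" using g(1) that E_nonneg by (auto simp: strict_mono_on_def)
    thus ?thesis using g(2) that by simp
  qed
  define s where "s = (\<Sum>j\<in>UNIV. P i j * V beta lam P E zeta t j)"
  define s' where "s' = (\<Sum>j\<in>UNIV. P i j * V beta lam P E zeta (Suc t) j)"
  have ss: "s \<le> s'" unfolding s_def s'_def
    by (rule sum_mono, rule mult_left_mono,
        rule V_mono_step[OF P_nonneg E_fin \<open>0 \<in> E\<close> zeta_range zeta_zero])
       (simp add: P_nonneg)
  have "Min {e \<in> E. \<forall>e'\<in>E. (\<lambda>s e. - lam * e + zeta i e * beta + (1 - zeta i e) * s) s' e'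
            \<le> (\<lambda>s e. - lam * e + zeta i e * beta + (1 - zeta i e) * s) s' e}
        \<le> Min {e \<in> E. \<forall>e'\<in>E. (\<lambda>s e. - lam * e + zeta i e * beta + (1 - zeta i e) * s) s e'
            \<le> (\<lambda>s e. - lam * e + zeta i e * beta + (1 - zeta i e) * s) s e}"
    by (rule argmin_mono[OF E_fin ne zmono ss])
  thus "estar beta lam P E zeta (tau + 1) i \<le> estar beta lam P E zeta tau i"
    unfolding estar_def objective_def t s_def s'_def by simp
qed

end
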